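(* For every $\omega\in\mathbb C\setminus i\mathbb R$ and every $y\in\big((2\operatorname{Re}\omega)^{-1}\mathbb Z\big)\setminus\big(\omega^{-1}\mathbb Z\cup\bar\omega^{-1}\mathbb Z\big)$, $$\sum_{k\in\mathbb Z}\frac{|\omega|^2y^2-k^2}{|\omega|^4y^4-2\operatorname{Re}(\omega^2)k^2y^2+k^4}=0.$$ In particular, for every $n\in\mathbb Z\setminus\{0\}$, $$\sum_{k\in\mathbb Z}\frac{n^2-k^2}{n^4+n^2k^2+k^4}=0\qquad\text{and}\qquad\sum_{k\in\mathbb Z}\frac{n^2-2k^2}{n^4+4k^4}=0.$$ *)

theory Defs
  imports "HOL-Analysis.Analysis"
begin

end

theory Submission imports Defs "HOL-Analysis.Analysis" begin

lemma inv_lim: "(\<lambda>N::nat. inverse (of_nat N + z :: complex)) \<longlonglongrightarrow> 0"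
proof -
  have "filterlim (\<lambda>N::nat. of_nat N :: complex) at_infinity sequentially"
    unfolding filterlim_at_infinity_conv_norm_at_top by (simp add: filterlim_real_sequentially)
  hence "filterlim (\<lambda>N::nat. of_nat N + z :: complex) at_infinity sequentially"
    by (rule tendsto_add_filterlim_at_infinity'[OF _ tendsto_const])
  thus ?thesis by (rule filterlim_compose[OF tendsto_inverse_0])
qed

lemma sym_lim:
  fixes f :: "int \<Rightarrow> 'a::{comm_monoid_add,topological_space}"
  assumes "(f has_sum S) UNIV"
  shows "(\<lambda>N::nat. \<Sum>k\<in>{-int N..int N}. f k) \<longlonglongrightarrow> S"
proof -
  have "filterlim (\<lambda>N::nat. {-int N..int N}) (finite_subsets_at_top UNIV) sequentially"
    unfolding filterlim_finite_subsets_at_top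
  proof (safe)
    fix X :: "int set" assume fX: "finite X"
    define b where "b = (\<Sum>y\<in>X. \<bar>y\<bar>)"
    have b: "\<bar>x\<bar> \<le> b" if "x \<in> X" for x
      unfolding b_def by (rule member_le_sum) (use that fX in auto)
    show "\<forall>\<^sub>F y in sequentially. finite {- int y..int y} \<and> X \<subseteq> {- int y..int y} \<and> {- int y..int y} \<subseteq> UNIV"
      using eventually_ge_at_top[of "nat b"]
    proof eventually_elim
      case (elim y)
      have by0: "b \<le> int y" using elim by (simp add: nat_le_iff)
      have "X \<subseteq> {-int y..int y}"
      proof
        fix x assume "x \<in> X"
        hence "\<bar>x\<bar> \<le> int y" using b by0 by (meson order_trans)
        then show "x \<in> {-int y..int y}" by (simp add: abs_le_iff)
      qed
      then show ?case by simp
    qed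
  qed
  moreover from assms have "(sum f \<longlongrightarrow> S) (finite_subsets_at_top UNIV)" unfolding has_sum_def .
  ultimately show ?thesis by (rule filterlim_compose[rotated])
qed

lemma tele: "(\<Sum>k\<in>{-int N..int N}. h (k+1) - h k) = h (int N + 1) - (h (- int N) :: 'a::ab_group_add)"
proof (induction N)
  case 0 then show ?case by simp
next
  case (Suc N)
  have e: "{-int (Suc N)..int (Suc N)} = insert (- int N - 1) (insert (int N + 1) {-int N..int N})"
    by auto
  have "h (- int N - 1) = h (-1 - int N)" by (rule arg_cong[where f=h]) simp
  then show ?case unfolding e using Suc by (simp add: algebra_simps)
qed

lemma refl_sum: "(\<Sum>k\<in>{-int N..int N}. p (- k)) = (\<Sum>k\<in>{-int N..int N}. (p k :: 'a::comm_monoid_add))"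
  by (rule sum.reindex_bij_witness[of _ uminus uminus]) auto

lemma pf:
  fixes u v x :: complex
  assumes "x - u \<noteq> 0" "x + u \<noteq> 0" "x - v \<noteq> 0" "x + v \<noteq> 0" "u + v \<noteq> 0"
  shows "(u * v - x ^ 2) / ((x ^ 2 - u ^ 2) * (x ^ 2 - v ^ 2)) =
     (1/(2*(u+v))) * (1/(x+v) - 1/(x-u) - 1/(x-v) + 1/(x+u))"
proof -
  have a: "x ^ 2 - u ^ 2 = (x-u)*(x+u)" "x ^ 2 - v ^ 2 = (x-v)*(x+v)" by algebra+
  have nu: "x ^ 2 - u ^ 2 \<noteq> 0" "x ^ 2 - v ^ 2 \<noteq> 0" unfolding a using assms by auto
  have b1: "1/(x+v) - 1/(x-v) = - 2 * v / (x ^ 2 - v ^ 2)"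
    unfolding a using assms by (simp add: divide_simps)
  have b2: "1/(x+u) - 1/(x-u) = - 2 * u / (x ^ 2 - u ^ 2)"
    unfolding a using assms by (simp add: divide_simps)
  have "1/(x+v) - 1/(x-u) - 1/(x-v) + 1/(x+u) = - 2 * v / (x ^ 2 - v ^ 2) + - 2 * u / (x ^ 2 - u ^ 2)"
    using b1 b2 by (simp add: algebra_simps)
  also have "... = (- 2 * v * (x ^ 2 - u ^ 2) + - 2 * u * (x ^ 2 - v ^ 2)) / ((x ^ 2 - u ^ 2) * (x ^ 2 - v ^ 2))"
    using nu by (simp add: field_simps)
  also have "(- 2 * v * (x ^ 2 - u ^ 2) + - 2 * u * (x ^ 2 - v ^ 2)) = 2 * (u+v) * (u * v - x ^ 2)"
    by (simp add: algebra_simps power2_eq_square)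
  finally have eq: "1/(x+v) - 1/(x-u) - 1/(x-v) + 1/(x+u) = 2 * (u+v) * (u * v - x ^ 2) / ((x ^ 2 - u ^ 2) * (x ^ 2 - v ^ 2))" .
  have h: "2 * (u+v) \<noteq> 0" by (metis assms(5) mult_eq_0_iff zero_neq_numeral)
  have gen: "\<And>a N D :: complex. a \<noteq> 0 \<Longrightarrow> 1/a * (a*N/D) = N/D" by simp
  show ?thesis unfolding eq by (rule gen[OF h, symmetric])
qed

lemma shift: "(\<Sum>k\<in>{-int N..int N}. h (k + int m) - h k) =
   (\<Sum>i<m. h (int N + 1 + int i) - (h (- int N + int i) :: 'a::ab_group_add))"
proof (induction m)
  case 0 then show ?case by simp
next
  case (Suc m)
  have "(\<Sum>k\<in>{-int N..int N}. h (k + int (Suc m)) - h k) =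
     (\<Sum>k\<in>{-int N..int N}. (h (k + 1 + int m) - h (k + int m)) + (h (k + int m) - h k))"
    by (rule sum.cong) (auto simp: algebra_simps)
  also have "... = (\<Sum>k\<in>{-int N..int N}. h (k + 1 + int m) - h (k + int m)) + (\<Sum>k\<in>{-int N..int N}. h (k + int m) - h k)"
    by (rule sum.distrib)
  also have "(\<Sum>k\<in>{-int N..int N}. h (k + 1 + int m) - h (k + int m)) = h (int N + 1 + int m) - h (- int N + int m)"
    using tele[of "\<lambda>k. h (k + int m)" N] by (simp add: algebra_simps)
  finally show ?case using Suc by (simp add: algebra_simps)
qed

lemma bound:
  fixes c B x :: real
  assumes "c \<ge> 0" "\<bar>B\<bar> \<le> c" "x ^ 2 \<ge> 4 * c + 1"
  shows "\<bar>(c - x ^ 2) / (c ^ 2 - 2 * B * x ^ 2 + x ^ 4)\<bar> \<le> 4 / (x ^ 2 + 1)"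
proof -
  define t where "t = x ^ 2"
  have x4: "x ^ 4 = t ^ 2" unfolding t_def by (simp add: power_mult[symmetric])
  have t1: "t \<ge> 1" "t \<ge> 4 * c" using assms unfolding t_def by auto
  have "B * t \<le> c * t" using assms(2) t1 by (intro mult_right_mono) auto
  moreover have "4 * c * t \<le> t * t" using t1 by (intro mult_right_mono) auto
  ultimately have nn: "2 * (c * c) + 4 * (c * t - B * t) + (t * t - 4 * c * t) \<ge> 0"
    by (intro add_nonneg_nonneg) auto
  have e1: "2 * (c ^ 2 - 2 * B * t + t ^ 2) - t ^ 2 = 2 * (c * c) + 4 * (c * t - B * t) + (t * t - 4 * c * t)"
    by (simp add: power2_eq_square algebra_simps)
  have D0: "0 \<le> 2 * (c ^ 2 - 2 * B * t + t ^ 2) - t ^ 2" using nn by (simp only: e1)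
  have gen: "\<And>X T :: real. 0 \<le> 2 * X - T \<Longrightarrow> T / 2 \<le> X" by linarith
  have D: "c ^ 2 - 2 * B * t + t ^ 2 \<ge> t ^ 2 / 2" by (rule gen[OF D0])
  have tp: "t ^ 2 / 2 > 0" using t1 by simp
  have Dp: "c ^ 2 - 2 * B * t + t ^ 2 > 0" using D tp by linarith
  have N: "\<bar>c - t\<bar> \<le> t" using t1 assms(1) by simp
  have "\<bar>(c - t) / (c ^ 2 - 2 * B * t + t ^ 2)\<bar> = \<bar>c - t\<bar> / (c ^ 2 - 2 * B * t + t ^ 2)"
    by (rule abs_div_pos[OF Dp, symmetric])
  also have "... \<le> t / (t ^ 2 / 2)"
    using D tp N by (intro frac_le) auto
  also have "... = 2 / t" using t1 by (simp add: power2_eq_square field_simps)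
  also have "... \<le> 4 / (t + 1)" using t1 by (simp add: field_simps)
  finally show ?thesis unfolding x4 t_def[symmetric] .
qed

lemma summ_nat: "summable (\<lambda>n::nat. 4 / (real n ^ 2 + 1))"
proof (rule summable_comparison_test')
  show "summable (\<lambda>n::nat. 4 * inverse (real n ^ 2))"
    by (intro summable_mult inverse_power_summable) auto
  fix n :: nat assume "n \<ge> 1"
  then have p1: "0 < real n ^ 2" by simp
  have p2: "0 < real n ^ 2 + 1" using p1 by linarith
  have "4 / (real n ^ 2 + 1) \<le> 4 / real n ^ 2"
    by (rule divide_left_mono) (use mult_pos_pos[OF p2 p1] in auto)
  then show "norm (4 / (real n ^ 2 + 1)) \<le> 4 * inverse (real n ^ 2)"
    by (simp add: divide_inverse)
qed

lemma summ_int: "(\<lambda>k::int. 4 / (real_of_int k ^ 2 + 1)) summable_on UNIV"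
proof -
  let ?g = "\<lambda>k::int. 4 / (real_of_int k ^ 2 + 1)"
  have U: "UNIV = range int \<union> range (\<lambda>n. - int n - 1)"
  proof safe
    fix k :: int assume k: "k \<notin> range (\<lambda>n. - int n - 1)"
    show "k \<in> range int"
    proof (cases "k \<ge> 0")
      case True
      then have "k = int (nat k)" by simp
      then show ?thesis by (rule image_eqI) simp
    next
      case False
      then have "k = - int (nat (- k - 1)) - 1" by simp
      then have "k \<in> range (\<lambda>n. - int n - 1)" by (rule image_eqI) simp
      with k show ?thesis by blast
    qed
  qed auto
  have s0: "(\<lambda>n::nat. 4 / (real n ^ 2 + 1)) summable_on UNIV"
    using summ_nat by (subst summable_on_UNIV_nonneg_real_iff) auto
  have "(?g \<circ> int) summable_on UNIV" using s0 by (simp add: o_def)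
  hence s1: "?g summable_on range int" by (subst summable_on_reindex) (auto intro: inj_onI)
  have "(?g \<circ> (\<lambda>n. - int n - 1)) summable_on UNIV"
  proof (rule summable_on_comparison_test[OF s0])
    fix n :: nat
    have sq: "(- real n - 1) ^ 2 = real n ^ 2 + 2 * real n + 1" by (simp add: power2_eq_square algebra_simps)
    have le: "real n ^ 2 + 1 \<le> (- real n - 1) ^ 2 + 1" unfolding sq by simp
    have "0 \<le> real n ^ 2" by simp
    hence q1: "0 < real n ^ 2 + 1" by linarith
    have q2: "0 < (- real n - 1) ^ 2 + 1" using q1 le by linarith
    have "4 / ((- real n - 1) ^ 2 + 1) \<le> 4 / (real n ^ 2 + 1)"
      by (rule divide_left_mono[OF le]) (use mult_pos_pos[OF q2 q1] in auto)
    then show "(?g \<circ> (\<lambda>n. - int n - 1)) n \<le> 4 / (real n ^ 2 + 1)"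
      by (simp add: o_def)
    show "0 \<le> (?g \<circ> (\<lambda>n. - int n - 1)) n" by simp
  qed
  hence s2: "?g summable_on range (\<lambda>n. - int n - 1)" by (subst summable_on_reindex) (auto intro: inj_onI)
  have d: "range int \<inter> range (\<lambda>n. - int n - 1) = {}" by auto
  show ?thesis unfolding U by (rule summable_on_Un_disjoint[OF s1 s2 d])
qed

lemma core:
  fixes u :: complex and m :: nat
  assumes m0: "m > 0" and mu: "2 * Re u = real m" and nz: "\<And>k::int. u \<noteq> of_int k"
  shows "((\<lambda>k::int. (cmod u ^ 2 - real_of_int k ^ 2) /
            ((cmod u ^ 2) ^ 2 - 2 * Re (u ^ 2) * real_of_int k ^ 2 + real_of_int k ^ 4)) has_sum 0) UNIV"
proof -
  define c where "c = cmod u ^ 2"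
  define B where "B = Re (u ^ 2)"
  define f where "f = (\<lambda>k::int. (c - real_of_int k ^ 2) / (c ^ 2 - 2 * B * real_of_int k ^ 2 + real_of_int k ^ 4))"
  define v where "v = cnj u"
  define g where "g = (\<lambda>j::int. 1 / (of_int j - u))"
  have c0: "c \<ge> 0" unfolding c_def by simp
  have Bc: "\<bar>B\<bar> \<le> c" unfolding B_def c_def
    by (metis abs_Re_le_cmod norm_power)
  have uv: "u * v = of_real c" unfolding v_def c_def by (metis complex_norm_square of_real_power)
  have upv: "u + v = of_nat m" unfolding v_def using mu
    by (simp add: complex_add_cnj)
  have u2v2: "u ^ 2 + v ^ 2 = of_real (2 * B)" unfolding v_def B_def
    by (metis complex_add_cnj complex_cnj_power of_real_mult of_real_numeral)
  have F: "complex_of_real (f k) = (1/(2* of_nat m)) * (g (k + int m) - g k + g (int m - k) - g (- k))" for k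
  proof -
    let ?x = "complex_of_int k"
    have n1: "?x - u \<noteq> 0" using nz[of k] by auto
    have n2: "?x + u \<noteq> 0" using nz[of "-k"] by (auto simp: add_eq_0_iff)
    have n3: "?x - v \<noteq> 0"
    proof
      assume a: "?x - v = 0"
      have "cnj (?x - u) = ?x - v" by (simp add: v_def)
      hence "cnj (?x - u) = 0" using a by (simp only:)
      hence "?x - u = 0" by (metis complex_cnj_zero_iff)
      with n1 show False by simp
    qed
    have n4: "?x + v \<noteq> 0"
    proof
      assume a: "?x + v = 0"
      have "cnj (?x + u) = ?x + v" by (simp add: v_def)
      hence "cnj (?x + u) = 0" using a by (simp only:)
      hence "?x + u = 0" by (metis complex_cnj_zero_iff)
      with n2 show False by simp
    qed
    have n5: "u + v \<noteq> 0" using upv m0 by simp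
    have den: "(?x ^ 2 - u ^ 2) * (?x ^ 2 - v ^ 2) = of_real (c ^ 2 - 2 * B * real_of_int k ^ 2 + real_of_int k ^ 4)"
    proof -
      have "(?x ^ 2 - u ^ 2) * (?x ^ 2 - v ^ 2) = ?x ^ 4 - (u ^ 2 + v ^ 2) * ?x ^ 2 + (u * v) ^ 2"
        by (simp add: algebra_simps power2_eq_square power4_eq_xxxx)
      also have "... = of_real (c ^ 2 - 2 * B * real_of_int k ^ 2 + real_of_int k ^ 4)"
        unfolding u2v2 uv by simp
      finally show ?thesis .
    qed
    have "complex_of_real (f k) = (u * v - ?x ^ 2) / ((?x ^ 2 - u ^ 2) * (?x ^ 2 - v ^ 2))"
      unfolding den f_def uv by simp
    also have "... = (1/(2*(u+v))) * (1/(?x+v) - 1/(?x-u) - 1/(?x-v) + 1/(?x+u))"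
      by (rule pf[OF n1 n2 n3 n4 n5])
    also have "... = (1/(2* of_nat m)) * (g (k + int m) - g k + g (int m - k) - g (- k))"
    proof -
      have vv: "v = of_nat m - u" using upv by (simp add: algebra_simps)
      have "1/(?x+v) = g (k + int m)" unfolding g_def vv by (simp add: algebra_simps)
      moreover have "1/(?x-u) = g k" unfolding g_def by simp
      moreover have "1/(?x-v) = - g (int m - k)"
      proof -
        have e: "of_int (int m - k) - u = - (?x - v)" unfolding vv by (simp add: algebra_simps)
        show ?thesis unfolding g_def e by (simp only: divide_minus_right minus_minus)
      qed
      moreover have "1/(?x+u) = - g (- k)"
      proof -
        have e: "of_int (- k) - u = - (?x + u)" by (simp add: algebra_simps)
        show ?thesis unfolding g_def e by (simp only: divide_minus_right minus_minus)
      qed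
      ultimately show ?thesis unfolding upv by (simp add: algebra_simps)
    qed
    finally show ?thesis .
  qed
  have summ: "f summable_on UNIV"
  proof -
    define A where "A = {k::int. real_of_int k ^ 2 \<ge> 4 * c + 1}"
    have "(\<lambda>k. norm (f k)) summable_on A"
    proof (rule Infinite_Sum.abs_summable_on_comparison_test')
      show "(\<lambda>k::int. 4 / (real_of_int k ^ 2 + 1)) summable_on A"
        by (rule summable_on_subset_banach[OF summ_int]) auto
      fix k assume "k \<in> A"
      then show "norm (f k) \<le> 4 / (real_of_int k ^ 2 + 1)"
        unfolding f_def A_def using bound[OF c0 Bc] by simp
    qed
    hence sA: "f summable_on A" using summable_on_iff_abs_summable_on_real by blast
    define M where "M = nat (ceiling (4 * c + 1))"
    have fin: "finite (UNIV - A)"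
    proof (rule finite_subset)
      show "UNIV - A \<subseteq> {- int M..int M}"
      proof
        fix k assume "k \<in> UNIV - A"
        hence "real_of_int k ^ 2 < 4 * c + 1" unfolding A_def by auto
        moreover have "\<bar>real_of_int k\<bar> \<le> real_of_int k ^ 2"
        proof (cases "k = 0")
          case False
          hence "1 \<le> \<bar>k\<bar>" by linarith
          hence k1: "1 \<le> \<bar>real_of_int k\<bar>" by (metis of_int_1_le_iff of_int_abs)
          have "\<bar>real_of_int k\<bar> * 1 \<le> \<bar>real_of_int k\<bar> * \<bar>real_of_int k\<bar>"
            using k1 by (intro mult_left_mono) auto
          then show ?thesis by (simp add: power2_eq_square abs_mult_self_eq)
        qed simp
        ultimately have "\<bar>real_of_int k\<bar> \<le> 4 * c + 1" by linarith
        hence "\<bar>k\<bar> \<le> ceiling (4 * c + 1)" by linarith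
        then show "k \<in> {- int M..int M}" unfolding M_def by auto
      qed
    qed simp
    have "f summable_on (A \<union> (UNIV - A))"
      by (rule summable_on_Un_disjoint[OF sA summable_on_finite[OF fin]]) auto
    then show ?thesis by simp
  qed
  define S where "S = infsum f UNIV"
  have hs: "(f has_sum S) UNIV" unfolding S_def using summ by simp
  have l1: "(\<lambda>N. complex_of_real (\<Sum>k\<in>{-int N..int N}. f k)) \<longlonglongrightarrow> complex_of_real S"
    by (rule tendsto_of_real[OF sym_lim[OF hs]])
  have eqN: "complex_of_real (\<Sum>k\<in>{-int N..int N}. f k) =
      (1 / of_nat m) * (\<Sum>i<m. g (int N + 1 + int i) - g (- int N + int i))" for N
  proof -
    have "complex_of_real (\<Sum>k\<in>{-int N..int N}. f k) = (\<Sum>k\<in>{-int N..int N}. complex_of_real (f k))"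
      by simp
    also have "... = (1/(2* of_nat m)) * (\<Sum>k\<in>{-int N..int N}. g (k + int m) - g k + g (int m - k) - g (- k))"
      unfolding F by (simp add: sum_distrib_left)
    also have "(\<Sum>k\<in>{-int N..int N}. g (k + int m) - g k + g (int m - k) - g (- k)) =
       (\<Sum>k\<in>{-int N..int N}. g (k + int m) - g k) + (\<Sum>k\<in>{-int N..int N}. g (int m + (- k))) - (\<Sum>k\<in>{-int N..int N}. g (- k))"
    proof -
      have "(\<Sum>k\<in>{-int N..int N}. g (k + int m) - g k + g (int m - k) - g (- k)) =
         (\<Sum>k\<in>{-int N..int N}. ((g (k + int m) - g k) + g (int m + (- k))) - g (- k))"
        by (rule sum.cong) simp_all
      also have "... = (\<Sum>k\<in>{-int N..int N}. g (k + int m) - g k) + (\<Sum>k\<in>{-int N..int N}. g (int m + (- k))) - (\<Sum>k\<in>{-int N..int N}. g (- k))"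
        by (simp only: sum.distrib sum_subtractf)
      finally show ?thesis .
    qed
    also have "(\<Sum>k\<in>{-int N..int N}. g (int m + (- k))) = (\<Sum>k\<in>{-int N..int N}. g (int m + k))"
      by (rule refl_sum)
    also have "(\<Sum>k\<in>{-int N..int N}. g (- k)) = (\<Sum>k\<in>{-int N..int N}. g k)"
      by (rule refl_sum)
    also have "(\<Sum>k\<in>{-int N..int N}. g (k + int m) - g k) + (\<Sum>k\<in>{-int N..int N}. g (int m + k)) - (\<Sum>k\<in>{-int N..int N}. g k)
        = 2 * (\<Sum>k\<in>{-int N..int N}. g (k + int m) - g k)"
    proof -
      have B': "(\<Sum>k\<in>{-int N..int N}. g (int m + k)) = (\<Sum>k\<in>{-int N..int N}. g (k + int m))"
        by (rule sum.cong) (simp_all add: add.commute)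
      have A': "(\<Sum>k\<in>{-int N..int N}. g (k + int m) - g k) = (\<Sum>k\<in>{-int N..int N}. g (k + int m)) - (\<Sum>k\<in>{-int N..int N}. g k)"
        by (rule sum_subtractf)
      show ?thesis unfolding B' A' by (simp add: algebra_simps)
    qed
    also have "(\<Sum>k\<in>{-int N..int N}. g (k + int m) - g k) = (\<Sum>i<m. g (int N + 1 + int i) - g (- int N + int i))"
      by (rule shift)
    finally show ?thesis using m0 by simp
  qed
  have l2: "(\<lambda>N. complex_of_real (\<Sum>k\<in>{-int N..int N}. f k)) \<longlonglongrightarrow> 0"
  proof -
    have "(\<lambda>N. (1 / of_nat m) * (\<Sum>i<m. g (int N + 1 + int i) - g (- int N + int i))) \<longlonglongrightarrow> (1 / of_nat m) * (\<Sum>i<m. 0 - 0)"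
    proof (intro tendsto_mult tendsto_const tendsto_sum tendsto_diff)
      fix i
      have "g (int N + 1 + int i) = inverse (of_nat N + (1 + of_nat i - u))" for N
        unfolding g_def by (simp add: divide_inverse algebra_simps)
      then show "(\<lambda>N. g (int N + 1 + int i)) \<longlonglongrightarrow> 0" using inv_lim by simp
      have "g (- int N + int i) = - inverse (of_nat N + (u - of_nat i))" for N
      proof -
        have e: "of_int (- int N + int i) - u = - (of_nat N + (u - of_nat i) :: complex)" by simp
        show ?thesis unfolding g_def e by (simp only: divide_inverse mult.left_neutral inverse_minus_eq)
      qed
      then show "(\<lambda>N. g (- int N + int i)) \<longlonglongrightarrow> 0"
        using tendsto_minus[OF inv_lim[of "u - of_nat i"]] by simp
    qed
    then show ?thesis unfolding eqN by simp
  qed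
  have "complex_of_real S = 0" using LIMSEQ_unique[OF l1 l2] .
  hence "S = 0" by simp
  with hs have "(f has_sum 0) UNIV" by (simp only:)
  then show ?thesis unfolding f_def c_def B_def .
qed

lemma part1:
  fixes \<omega> :: complex and y :: real
  assumes a0: "Re \<omega> \<noteq> 0" and ym: "\<exists>m::int. y = of_int m / (2 * Re \<omega>)"
    and nd: "\<not> (\<exists>m::int. complex_of_real y = of_int m / \<omega>)"
  shows "((\<lambda>k::int. (cmod \<omega> ^ 2 * y ^ 2 - real_of_int k ^ 2) /
                 (cmod \<omega> ^ 4 * y ^ 4 - 2 * Re (\<omega> ^ 2) * real_of_int k ^ 2 * y ^ 2
                  + real_of_int k ^ 4)) has_sum 0) UNIV"
proof -
  obtain m0 :: int where m0: "y = of_int m0 / (2 * Re \<omega>)" using ym by blast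
  have w0: "\<omega> \<noteq> 0" using a0 by auto
  define u0 where "u0 = \<omega> * complex_of_real y"
  have Ru: "2 * Re u0 = of_int m0" unfolding u0_def m0 using a0 by simp
  have nz0: "u0 \<noteq> of_int k" for k :: int
  proof
    assume "u0 = of_int k"
    hence "complex_of_real y = of_int k / \<omega>" unfolding u0_def using w0 by (simp add: field_simps)
    with nd show False by blast
  qed
  have m00: "m0 \<noteq> 0"
  proof
    assume "m0 = 0"
    hence "y = 0" using m0 by simp
    hence "complex_of_real y = of_int 0 / \<omega>" by simp
    with nd show False by blast
  qed
  have fe: "(\<lambda>k::int. (cmod \<omega> ^ 2 * y ^ 2 - real_of_int k ^ 2) /
                 (cmod \<omega> ^ 4 * y ^ 4 - 2 * Re (\<omega> ^ 2) * real_of_int k ^ 2 * y ^ 2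
                  + real_of_int k ^ 4)) =
     (\<lambda>k::int. (cmod u ^ 2 - real_of_int k ^ 2) /
            ((cmod u ^ 2) ^ 2 - 2 * Re (u ^ 2) * real_of_int k ^ 2 + real_of_int k ^ 4))"
    if "u = u0 \<or> u = - u0" for u
  proof -
    have c: "cmod u ^ 2 = cmod \<omega> ^ 2 * y ^ 2" using that unfolding u0_def
      by (auto simp: norm_mult power_mult_distrib)
    have r: "Re (u ^ 2) = Re (\<omega> ^ 2) * y ^ 2" using that unfolding u0_def
      by (auto simp: power_mult_distrib)
    show ?thesis unfolding c r by (simp add: algebra_simps power_mult_distrib flip: power_mult)
  qed
  show ?thesis
  proof (cases "m0 > 0")
    case True
    have "2 * Re u0 = real (nat m0)" using Ru True by simp
    from core[OF _ this nz0] True show ?thesis by (simp add: fe[of u0])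
  next
    case False
    hence mp: "- m0 > 0" using m00 by simp
    have "2 * Re (- u0) = real (nat (- m0))" using Ru mp by simp
    moreover have "- u0 \<noteq> of_int k" for k :: int
    proof
      assume "- u0 = of_int k"
      hence "u0 = of_int (- k)" by (metis minus_minus of_int_minus)
      with nz0 show False by blast
    qed
    ultimately have "((\<lambda>k::int. (cmod (- u0) ^ 2 - real_of_int k ^ 2) /
            ((cmod (- u0) ^ 2) ^ 2 - 2 * Re ((- u0) ^ 2) * real_of_int k ^ 2 + real_of_int k ^ 4)) has_sum 0) UNIV"
      using core[of "nat (- m0)" "- u0"] mp by simp
    then show ?thesis by (simp add: fe[of "- u0"])
  qed
qed

lemma half_lemma:
  fixes X :: "int \<Rightarrow> real"
  assumes "((\<lambda>k. (1/2) * (2 * X k)) has_sum (1/2) * 0) UNIV"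
  shows "(X has_sum 0) UNIV"
  using assms by simp

theorem mainTheorem5:
  shows "(\<forall>(\<omega>::complex) (y::real).
            Re \<omega> \<noteq> 0 \<longrightarrow>
            (\<exists>m::int. y = of_int m / (2 * Re \<omega>)) \<longrightarrow>
            \<not> (\<exists>m::int. complex_of_real y = of_int m / \<omega>) \<longrightarrow>
            \<not> (\<exists>m::int. complex_of_real y = of_int m / cnj \<omega>) \<longrightarrow>
            ((\<lambda>k::int. (cmod \<omega> ^ 2 * y ^ 2 - real_of_int k ^ 2) /
                 (cmod \<omega> ^ 4 * y ^ 4 - 2 * Re (\<omega> ^ 2) * real_of_int k ^ 2 * y ^ 2
                  + real_of_int k ^ 4)) has_sum 0) UNIV)
       \<and> (\<forall>n::int. n \<noteq> 0 \<longrightarrow>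
            ((\<lambda>k::int. (real_of_int n ^ 2 - real_of_int k ^ 2) /
                 (real_of_int n ^ 4 + real_of_int n ^ 2 * real_of_int k ^ 2 + real_of_int k ^ 4))
               has_sum 0) UNIV
          \<and> ((\<lambda>k::int. (real_of_int n ^ 2 - 2 * real_of_int k ^ 2) /
                 (real_of_int n ^ 4 + 4 * real_of_int k ^ 4))
               has_sum 0) UNIV)"
proof (intro conjI allI impI)
  fix \<omega> :: complex and y :: real
  assume "Re \<omega> \<noteq> 0" "\<exists>m::int. y = of_int m / (2 * Re \<omega>)"
    "\<not> (\<exists>m::int. complex_of_real y = of_int m / \<omega>)"
  then show "((\<lambda>k::int. (cmod \<omega> ^ 2 * y ^ 2 - real_of_int k ^ 2) /
                 (cmod \<omega> ^ 4 * y ^ 4 - 2 * Re (\<omega> ^ 2) * real_of_int k ^ 2 * y ^ 2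
                  + real_of_int k ^ 4)) has_sum 0) UNIV" by (rule part1)
next
  fix n :: int assume n0: "n \<noteq> 0"
  define \<omega> where "\<omega> = Complex (1/2) (sqrt 3 / 2)"
  have s3: "sqrt 3 ^ 2 = 3" by simp
  have cm: "cmod \<omega> ^ 2 = 1" unfolding \<omega>_def cmod_power2 by (simp add: power_divide s3)
  have re: "Re (\<omega> ^ 2) = - 1/2" unfolding \<omega>_def by (simp add: power2_eq_square s3[unfolded power2_eq_square])
  have "cmod \<omega> ^ 4 = (cmod \<omega> ^ 2) ^ 2" by simp
  hence cm4: "cmod \<omega> ^ 4 = 1" using cm by simp
  have "((\<lambda>k::int. (cmod \<omega> ^ 2 * real_of_int n ^ 2 - real_of_int k ^ 2) /
                 (cmod \<omega> ^ 4 * real_of_int n ^ 4 - 2 * Re (\<omega> ^ 2) * real_of_int k ^ 2 * real_of_int n ^ 2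
                  + real_of_int k ^ 4)) has_sum 0) UNIV"
  proof (rule part1)
    show "Re \<omega> \<noteq> 0" unfolding \<omega>_def by simp
    show "\<exists>m::int. real_of_int n = of_int m / (2 * Re \<omega>)" unfolding \<omega>_def by (rule exI[of _ n]) simp
    show "\<not> (\<exists>m::int. complex_of_real (real_of_int n) = of_int m / \<omega>)"
    proof
      assume "\<exists>m::int. complex_of_real (real_of_int n) = of_int m / \<omega>"
      then obtain m :: int where "complex_of_real (real_of_int n) = of_int m / \<omega>" by blast
      moreover have "\<omega> \<noteq> 0" unfolding \<omega>_def by (simp add: complex_eq_iff)
      ultimately have "\<omega> * of_int n = of_int m" by (simp add: field_simps)
      hence "Im (\<omega> * of_int n) = 0" by (metis complex_Im_of_int)
      thus False unfolding \<omega>_def using n0 by simp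
    qed
  qed
  then show "((\<lambda>k::int. (real_of_int n ^ 2 - real_of_int k ^ 2) /
                 (real_of_int n ^ 4 + real_of_int n ^ 2 * real_of_int k ^ 2 + real_of_int k ^ 4))
               has_sum 0) UNIV"
    unfolding cm cm4 re by (simp add: algebra_simps)
next
  fix n :: int assume n0: "n \<noteq> 0"
  define \<omega> where "\<omega> = Complex 1 1"
  have cm: "cmod \<omega> ^ 2 = 2" unfolding \<omega>_def cmod_power2 by simp
  have re: "Re (\<omega> ^ 2) = 0" unfolding \<omega>_def by (simp add: power2_eq_square)
  have "cmod \<omega> ^ 4 = (cmod \<omega> ^ 2) ^ 2" by simp
  hence cm4: "cmod \<omega> ^ 4 = 4" using cm by simp
  have "((\<lambda>k::int. (cmod \<omega> ^ 2 * (real_of_int n / 2) ^ 2 - real_of_int k ^ 2) /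
                 (cmod \<omega> ^ 4 * (real_of_int n / 2) ^ 4 - 2 * Re (\<omega> ^ 2) * real_of_int k ^ 2 * (real_of_int n / 2) ^ 2
                  + real_of_int k ^ 4)) has_sum 0) UNIV"
  proof (rule part1)
    show "Re \<omega> \<noteq> 0" unfolding \<omega>_def by simp
    show "\<exists>m::int. real_of_int n / 2 = of_int m / (2 * Re \<omega>)" unfolding \<omega>_def by (rule exI[of _ n]) simp
    show "\<not> (\<exists>m::int. complex_of_real (real_of_int n / 2) = of_int m / \<omega>)"
    proof
      assume "\<exists>m::int. complex_of_real (real_of_int n / 2) = of_int m / \<omega>"
      then obtain m :: int where "complex_of_real (real_of_int n / 2) = of_int m / \<omega>" by blast
      moreover have "\<omega> \<noteq> 0" unfolding \<omega>_def by (simp add: complex_eq_iff)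
      ultimately have "\<omega> * of_real (real_of_int n / 2) = of_int m" by (simp add: field_simps)
      hence "Im (\<omega> * of_real (real_of_int n / 2)) = 0" by (metis complex_Im_of_int)
      thus False unfolding \<omega>_def using n0 by simp
    qed
  qed
  hence h: "((\<lambda>k::int. 2 * ((real_of_int n ^ 2 - 2 * real_of_int k ^ 2) /
                 (real_of_int n ^ 4 + 4 * real_of_int k ^ 4))) has_sum 0) UNIV"
  proof (rule has_sum_cong[THEN iffD1, rotated])
    fix k :: int
    have d: "real_of_int n ^ 4 + 4 * real_of_int k ^ 4 > 0" using n0
      by (intro add_pos_nonneg) auto
    show "(cmod \<omega> ^ 2 * (real_of_int n / 2) ^ 2 - real_of_int k ^ 2) /
                 (cmod \<omega> ^ 4 * (real_of_int n / 2) ^ 4 - 2 * Re (\<omega> ^ 2) * real_of_int k ^ 2 * (real_of_int n / 2) ^ 2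
                  + real_of_int k ^ 4) = 2 * ((real_of_int n ^ 2 - 2 * real_of_int k ^ 2) /
                 (real_of_int n ^ 4 + 4 * real_of_int k ^ 4))"
      unfolding cm cm4 re using d by (simp add: field_simps power_divide)
  qed
  have "((\<lambda>k::int. (1/2) * (2 * ((real_of_int n ^ 2 - 2 * real_of_int k ^ 2) /
                 (real_of_int n ^ 4 + 4 * real_of_int k ^ 4)))) has_sum (1/2) * 0) UNIV"
    by (rule has_sum_cmult_right[OF h])
  then show "((\<lambda>k::int. (real_of_int n ^ 2 - 2 * real_of_int k ^ 2) /
                 (real_of_int n ^ 4 + 4 * real_of_int k ^ 4)) has_sum 0) UNIV"
    by (rule half_lemma)
qed

end
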